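(* Let $f$ be any WTP function, $\tilde f$ its concave relaxation, and $\widetilde F(\tilde x)=\max_{\tilde y\in\widetilde{\mathcal{Y}}_{\mathcal{M}}(\tilde x)}\tilde f(\tilde y)$. Then $\widetilde F$ is concave on $\widetilde{\mathcal{X}}_\ell$.
   Context: $\mathcal{M}$ is a matroid on $[n]$ with matroid polytope $\mathcal{P}(\mathcal{M})$ (convex hull of characteristic vectors of independent sets). $\widetilde{\mathcal{X}}_\ell=\{\tilde x\in[0,1]^n:\sum_i\tilde x_i\le\ell\}$ and $\widetilde{\mathcal{Y}}_{\mathcal{M}}(\tilde x)=\{\tilde y\in[0,1]^n:\tilde y\in\mathcal{P}(\mathcal{M}),\tilde y\le\tilde x\}$. A WTP function is $f(y)=\sum_{j\in\mathcal{C}}c_j\min\{b_j,y\cdot w_j\}$ for $y\in\{0,1\}^n$, with finite $\mathcal{C}$, $c_j>0$, $b_j\in\mathbb{R}_{\ge0}\cup\{\infty\}$, $w_j\in\mathbb{R}^n_{\ge0}$; its concave relaxation $\tilde f$ is the same formula for $y\in[0,1]^n$. *)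

theory Defs
  imports "HOL-Analysis.Analysis"
begin

text \<open>Ground set [n] is modelled as the finite type 'n; vectors in R^n are real^'n.\<close>

definition matroid :: "'n::finite set set \<Rightarrow> bool" where
  "matroid I \<longleftrightarrow>
     {} \<in> I \<and>
     (\<forall>A B. A \<in> I \<longrightarrow> B \<subseteq> A \<longrightarrow> B \<in> I) \<and>
     (\<forall>A B. A \<in> I \<longrightarrow> B \<in> I \<longrightarrow> card A < card B \<longrightarrow> (\<exists>e \<in> B - A. insert e A \<in> I))"

definition char_vec :: "'n::finite set \<Rightarrow> real ^ 'n" where
  "char_vec A = (\<chi> i. if i \<in> A then 1 else 0)"

definition matroid_polytope :: "'n::finite set set \<Rightarrow> (real ^ 'n) set" where
  "matroid_polytope I = convex hull (char_vec ` I)"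

definition unit_cube :: "(real ^ 'n::finite) set" where
  "unit_cube = {x. \<forall>i. 0 \<le> x $ i \<and> x $ i \<le> 1}"

definition X_tilde :: "nat \<Rightarrow> (real ^ 'n::finite) set" where
  "X_tilde l = {x \<in> unit_cube. (\<Sum>i\<in>UNIV. x $ i) \<le> real l}"

definition Y_tilde :: "'n::finite set set \<Rightarrow> real ^ 'n \<Rightarrow> (real ^ 'n) set" where
  "Y_tilde I x = {y \<in> unit_cube. y \<in> matroid_polytope I \<and> (\<forall>i. y $ i \<le> x $ i)}"

text \<open>A WTP function (and its concave relaxation: the same formula evaluated on [0,1]^n).
  Index set C, coefficients c_j > 0, caps b_j in R_{>=0} \<union> {\<infinity>} (as ereal), weights w_j \<ge> 0.\<close>

definition wtp_params :: "'c set \<Rightarrow> ('c \<Rightarrow> real) \<Rightarrow> ('c \<Rightarrow> ereal) \<Rightarrow> ('c \<Rightarrow> real ^ 'n::finite) \<Rightarrow> bool" where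
  "wtp_params C c b w \<longleftrightarrow> finite C \<and> (\<forall>j\<in>C. c j > 0 \<and> b j \<ge> 0 \<and> (\<forall>i. w j $ i \<ge> 0))"

definition wtp_fun :: "'c set \<Rightarrow> ('c \<Rightarrow> real) \<Rightarrow> ('c \<Rightarrow> ereal) \<Rightarrow> ('c \<Rightarrow> real ^ 'n::finite) \<Rightarrow> real ^ 'n \<Rightarrow> real" where
  "wtp_fun C c b w y = (\<Sum>j\<in>C. c j * real_of_ereal (min (b j) (ereal (y \<bullet> w j))))"

definition F_tilde :: "'n::finite set set \<Rightarrow> 'c set \<Rightarrow> ('c \<Rightarrow> real) \<Rightarrow> ('c \<Rightarrow> ereal) \<Rightarrow> ('c \<Rightarrow> real ^ 'n) \<Rightarrow> real ^ 'n \<Rightarrow> real" where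
  "F_tilde I C c b w x = (SUP y \<in> Y_tilde I x. wtp_fun C c b w y)"

end

theory Submission
  imports Defs
begin

lemma convex_unit_cube: "convex (unit_cube :: (real ^ 'n::finite) set)"
proof (rule convexI)
  fix x y :: "real ^ 'n" and u v :: real
  assume x0: "x \<in> unit_cube" and y0: "y \<in> unit_cube" and uv0: "0 \<le> u" "0 \<le> v" "u + v = 1"
  have x: "\<forall>i. 0 \<le> x $ i \<and> x $ i \<le> 1" and y: "\<forall>i. 0 \<le> y $ i \<and> y $ i \<le> 1"
    using x0 y0 unfolding unit_cube_def by auto
  have u: "0 \<le> u" and v: "0 \<le> v" and uv: "u + v = 1" using uv0 by auto
  have "0 \<le> u * x $ i + v * y $ i \<and> u * x $ i + v * y $ i \<le> 1" for i
  proof -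
    have a: "0 \<le> u * x $ i" "0 \<le> v * y $ i" using x y u v by auto
    have "u * x $ i \<le> u" "v * y $ i \<le> v" using x y u v by (simp_all add: mult_left_le)
    then show ?thesis using a uv by linarith
  qed
  then show "u *\<^sub>R x + v *\<^sub>R y \<in> unit_cube" unfolding unit_cube_def by simp
qed

lemma convex_X: "convex (X_tilde l :: (real ^ 'n::finite) set)"
proof (rule convexI)
  fix x y :: "real ^ 'n" and u v :: real
  assume x: "x \<in> X_tilde l" and y: "y \<in> X_tilde l" and uv: "0 \<le> u" "0 \<le> v" "u + v = 1"
  have c: "u *\<^sub>R x + v *\<^sub>R y \<in> unit_cube"
    using convex_unit_cube x y uv unfolding X_tilde_def convex_def by auto
  have "(\<Sum>i\<in>UNIV. (u *\<^sub>R x + v *\<^sub>R y) $ i) = u * (\<Sum>i\<in>UNIV. x $ i) + v * (\<Sum>i\<in>UNIV. y $ i)"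
    by (simp add: sum.distrib sum_distrib_left)
  also have "\<dots> \<le> u * real l + v * real l"
    using x y uv unfolding X_tilde_def by (intro add_mono mult_left_mono) auto
  also have "\<dots> = real l" using uv by (metis distrib_right mult_1 mult.commute)
  finally have "(\<Sum>i\<in>UNIV. (u *\<^sub>R x + v *\<^sub>R y) $ i) \<le> real l" .
  then show "u *\<^sub>R x + v *\<^sub>R y \<in> X_tilde l" using c unfolding X_tilde_def by blast
qed

definition gmin :: "ereal \<Rightarrow> real \<Rightarrow> real" where
  "gmin b t = real_of_ereal (min b (ereal t))"

lemma gmin_concave:
  assumes "b \<ge> 0" "u \<ge> 0" "v \<ge> 0" "u + v = 1"
  shows "u * gmin b s + v * gmin b t \<le> gmin b (u * s + v * t)"
proof (cases b)
  case (real r)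
  have "u * min r s + v * min r t \<le> min r (u * s + v * t)"
  proof -
    have "u * min r s + v * min r t \<le> u * r + v * r"
      using assms by (intro add_mono mult_left_mono) auto
    moreover have "u * min r s + v * min r t \<le> u * s + v * t"
      using assms by (intro add_mono mult_left_mono) auto
    ultimately show ?thesis using assms(4) by (simp add: distrib_right[symmetric])
  qed
  moreover have "\<And>x. gmin b x = min r x" using real by (simp add: gmin_def min_def)
  ultimately show ?thesis by simp
next
  case PInf
  then show ?thesis by (simp add: gmin_def)
next
  case MInf
  then show ?thesis using assms by simp
qed

lemma gmin_le:
  assumes "b \<ge> 0" "t \<ge> 0"
  shows "gmin b t \<le> t"
  using assms by (cases b) (auto simp: gmin_def min_def)

lemma wtp_gmin: "wtp_fun C c b w y = (\<Sum>j\<in>C. c j * gmin (b j) (y \<bullet> w j))"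
  by (simp add: wtp_fun_def gmin_def)

lemma wtp_concave:
  assumes "wtp_params C c b w" "u \<ge> 0" "v \<ge> 0" "u + v = 1"
  shows "u * wtp_fun C c b w y1 + v * wtp_fun C c b w y2 \<le> wtp_fun C c b w (u *\<^sub>R y1 + v *\<^sub>R y2)"
proof -
  have "u * wtp_fun C c b w y1 + v * wtp_fun C c b w y2
      = (\<Sum>j\<in>C. c j * (u * gmin (b j) (y1 \<bullet> w j) + v * gmin (b j) (y2 \<bullet> w j)))"
    by (simp add: wtp_gmin sum_distrib_left sum.distrib[symmetric] algebra_simps)
  also have "\<dots> \<le> (\<Sum>j\<in>C. c j * gmin (b j) ((u *\<^sub>R y1 + v *\<^sub>R y2) \<bullet> w j))"
  proof (rule sum_mono)
    fix j assume j: "j \<in> C"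
    have "(u *\<^sub>R y1 + v *\<^sub>R y2) \<bullet> w j = u * (y1 \<bullet> w j) + v * (y2 \<bullet> w j)"
      by (simp add: inner_add_left)
    moreover have "c j > 0" "b j \<ge> 0" using assms(1) j unfolding wtp_params_def by auto
    ultimately show "c j * (u * gmin (b j) (y1 \<bullet> w j) + v * gmin (b j) (y2 \<bullet> w j))
        \<le> c j * gmin (b j) ((u *\<^sub>R y1 + v *\<^sub>R y2) \<bullet> w j)"
      using gmin_concave[of "b j" u v] assms by (auto intro: mult_left_mono)
  qed
  also have "\<dots> = wtp_fun C c b w (u *\<^sub>R y1 + v *\<^sub>R y2)" by (simp add: wtp_gmin)
  finally show ?thesis .
qed

lemma wtp_bound:
  assumes "wtp_params C c b w" "y \<in> unit_cube"
  shows "wtp_fun C c b w y \<le> (\<Sum>j\<in>C. c j * (\<Sum>i\<in>UNIV. w j $ i))"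
  unfolding wtp_gmin
proof (rule sum_mono)
  fix j assume j: "j \<in> C"
  have p: "c j > 0" "b j \<ge> 0" "\<forall>i. w j $ i \<ge> 0" using assms(1) j unfolding wtp_params_def by auto
  have y: "\<forall>i. 0 \<le> y $ i \<and> y $ i \<le> 1" using assms(2) unfolding unit_cube_def by auto
  have e: "y \<bullet> w j = (\<Sum>i\<in>UNIV. y $ i * w j $ i)" by (simp add: inner_vec_def)
  have "y \<bullet> w j \<ge> 0" unfolding e using p y by (intro sum_nonneg) auto
  moreover have "y \<bullet> w j \<le> (\<Sum>i\<in>UNIV. w j $ i)" unfolding e
    using p y by (intro sum_mono) (simp add: mult_left_le_one_le)
  ultimately have "gmin (b j) (y \<bullet> w j) \<le> (\<Sum>i\<in>UNIV. w j $ i)"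
    using gmin_le[of "b j" "y \<bullet> w j"] p by linarith
  then show "c j * gmin (b j) (y \<bullet> w j) \<le> c j * (\<Sum>i\<in>UNIV. w j $ i)"
    using p by (intro mult_left_mono) auto
qed

lemma Y_nonempty:
  assumes "matroid I" "x \<in> unit_cube"
  shows "0 \<in> Y_tilde I x"
proof -
  have "{} \<in> I" using assms(1) unfolding matroid_def by auto
  moreover have "char_vec {} = 0" by (simp add: char_vec_def vec_eq_iff)
  ultimately have "0 \<in> matroid_polytope I" unfolding matroid_polytope_def
    by (metis hull_inc image_eqI)
  then show ?thesis using assms(2) unfolding Y_tilde_def unit_cube_def by auto
qed

lemma Y_comb:
  assumes "y1 \<in> Y_tilde I x1" "y2 \<in> Y_tilde I x2" "u \<ge> 0" "v \<ge> 0" "u + v = 1"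
  shows "u *\<^sub>R y1 + v *\<^sub>R y2 \<in> Y_tilde I (u *\<^sub>R x1 + v *\<^sub>R x2)"
proof -
  have "u *\<^sub>R y1 + v *\<^sub>R y2 \<in> unit_cube"
    using convex_unit_cube assms unfolding Y_tilde_def convex_def by auto
  moreover have "u *\<^sub>R y1 + v *\<^sub>R y2 \<in> matroid_polytope I"
    using convex_convex_hull[of "char_vec ` I"] assms unfolding Y_tilde_def convex_def matroid_polytope_def
    by auto
  moreover have "\<forall>i. (u *\<^sub>R y1 + v *\<^sub>R y2) $ i \<le> (u *\<^sub>R x1 + v *\<^sub>R x2) $ i"
    using assms unfolding Y_tilde_def by (auto intro!: add_mono mult_left_mono)
  ultimately show ?thesis unfolding Y_tilde_def by auto
qed

theorem lemma16:
  fixes I :: "'n::finite set set"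
    and C :: "'c set" and c :: "'c \<Rightarrow> real" and b :: "'c \<Rightarrow> ereal" and w :: "'c \<Rightarrow> real ^ 'n"
    and l :: nat
  assumes "matroid I"
    and "wtp_params C c b w"
  shows "concave_on (X_tilde l) (F_tilde I C c b w)"
proof -
  let ?f = "wtp_fun C c b w"
  let ?F = "F_tilde I C c b w"
  have bdd: "bdd_above (?f ` Y_tilde I x)" for x
    using wtp_bound[OF assms(2)] unfolding Y_tilde_def bdd_above_def by blast
  have ne: "Y_tilde I x \<noteq> {}" if "x \<in> X_tilde l" for x
    using Y_nonempty[OF assms(1)] that unfolding X_tilde_def by blast
  have up: "?f y \<le> ?F x" if "y \<in> Y_tilde I x" for x y
    unfolding F_tilde_def using bdd that by (intro cSUP_upper) auto
  have least: "?F x \<le> B" if "x \<in> X_tilde l" "\<And>y. y \<in> Y_tilde I x \<Longrightarrow> ?f y \<le> B" for x B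
    unfolding F_tilde_def using ne[OF that(1)] that(2) by (intro cSUP_least) auto
  show ?thesis unfolding concave_on_iff
  proof (intro conjI convex_X ballI allI impI)
    fix x1 x2 :: "real ^ 'n" and u v :: real
    assume x1: "x1 \<in> X_tilde l" and x2: "x2 \<in> X_tilde l" and u: "0 \<le> u" and v: "0 \<le> v" and uv: "u + v = 1"
    let ?z = "u *\<^sub>R x1 + v *\<^sub>R x2"
    show "u * ?F x1 + v * ?F x2 \<le> ?F ?z"
    proof (cases "u = 0 \<or> v = 0")
      case True
      then show ?thesis using uv by auto
    next
      case False
      then have up0: "u > 0" "v > 0" using u v by auto
      have key: "u * ?f y1 + v * ?f y2 \<le> ?F ?z" if "y1 \<in> Y_tilde I x1" "y2 \<in> Y_tilde I x2" for y1 y2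
        using wtp_concave[OF assms(2) u v uv, of y1 y2] up[OF Y_comb[OF that u v uv]] by linarith
      have s1: "?F x1 \<le> (?F ?z - v * ?f y2) / u" if "y2 \<in> Y_tilde I x2" for y2
      proof (rule least[OF x1])
        fix y1 assume "y1 \<in> Y_tilde I x1"
        from key[OF this that] show "?f y1 \<le> (?F ?z - v * ?f y2) / u"
          using up0 by (simp add: field_simps)
      qed
      have "?F x2 \<le> (?F ?z - u * ?F x1) / v"
      proof (rule least[OF x2])
        fix y2 assume "y2 \<in> Y_tilde I x2"
        from s1[OF this] show "?f y2 \<le> (?F ?z - u * ?F x1) / v"
          using up0 by (simp add: field_simps)
      qed
      then show ?thesis using up0 by (simp add: field_simps)
    qed
  qed
qed

end
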